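(* Let $R$ be a locally stable commutative ring. Then $R$ is an elementary divisor ring if and only if $R$ is a Bézout ring.
   Context: All rings are commutative with identity. A ring $R$ has stable range 1 if whenever $aR+bR=R$ there is $y\in R$ with $a+by$ a unit. $R$ is locally stable if whenever $a,b\in R$ with $aR+bR=R$ there is $y\in R$ such that $R/(a+by)R$ has stable range 1. A ring is Bézout if every finitely generated ideal is principal. A matrix $A$ (not necessarily square) admits diagonal reduction if there are invertible $P,Q$ with $PAQ$ diagonal $(d_{ij})$ and $d_{ii}\mid d_{(i+1)(i+1)}$ for each $i$; $R$ is an elementary divisor ring if every matrix over $R$ admits diagonal reduction. *)

theory Defs
  imports "Jordan_Normal_Form.Matrix"
begin

definition stable_range_one :: "'a::comm_ring_1 itself \<Rightarrow> bool" where
  "stable_range_one _ \<longleftrightarrow>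
     (\<forall>a b::'a. (\<exists>x y. a * x + b * y = 1) \<longrightarrow> (\<exists>y. (a + b * y) dvd 1))"

text \<open>The quotient ring R/cR has stable range 1, stated by unfolding the quotient:
  residues modulo c, ideal generated by residues of a,b is everything,
  and units of R/cR.\<close>
definition quotient_stable_range_one :: "'a::comm_ring_1 \<Rightarrow> bool" where
  "quotient_stable_range_one c \<longleftrightarrow>
     (\<forall>a b::'a. (\<exists>x y. c dvd (a * x + b * y - 1)) \<longrightarrow>
        (\<exists>y. \<exists>u. c dvd ((a + b * y) * u - 1)))"

definition locally_stable :: "'a::comm_ring_1 itself \<Rightarrow> bool" where
  "locally_stable _ \<longleftrightarrow>
     (\<forall>a b::'a. (\<exists>x y. a * x + b * y = 1) \<longrightarrow>
        (\<exists>y. quotient_stable_range_one (a + b * y)))"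

definition gen_ideal :: "'a::comm_ring_1 set \<Rightarrow> 'a set" where
  "gen_ideal S = {x. \<exists>T f. finite T \<and> T \<subseteq> S \<and> x = (\<Sum>s\<in>T. f s * s)}"

definition bezout_ring :: "'a::comm_ring_1 itself \<Rightarrow> bool" where
  "bezout_ring _ \<longleftrightarrow>
     (\<forall>S::'a set. finite S \<longrightarrow> (\<exists>d. gen_ideal S = range (\<lambda>r. d * r)))"

definition diagonal_divisibility :: "'a::comm_ring_1 mat \<Rightarrow> bool" where
  "diagonal_divisibility D \<longleftrightarrow>
     (\<forall>i j. i < dim_row D \<longrightarrow> j < dim_col D \<longrightarrow> i \<noteq> j \<longrightarrow> D $$ (i, j) = 0) \<and>
     (\<forall>i. Suc i < dim_row D \<longrightarrow> Suc i < dim_col D \<longrightarrow>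
        D $$ (i, i) dvd D $$ (Suc i, Suc i))"

definition admits_diagonal_reduction :: "'a::comm_ring_1 mat \<Rightarrow> bool" where
  "admits_diagonal_reduction A \<longleftrightarrow>
     (\<exists>P Q. P \<in> carrier_mat (dim_row A) (dim_row A) \<and> invertible_mat P \<and>
            Q \<in> carrier_mat (dim_col A) (dim_col A) \<and> invertible_mat Q \<and>
            diagonal_divisibility (P * A * Q))"

definition elementary_divisor_ring :: "'a::comm_ring_1 itself \<Rightarrow> bool" where
  "elementary_divisor_ring _ \<longleftrightarrow> (\<forall>A::'a mat. admits_diagonal_reduction A)"

end

theory Submission
  imports Defs
begin


lemma qsr1_dvd:
  fixes s k :: "'a::comm_ring_1"
  assumes q: "quotient_stable_range_one s" and kd: "k dvd s"
  shows "quotient_stable_range_one k"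
  unfolding quotient_stable_range_one_def
proof (intro allI impI)
  fix a b :: 'a
  assume "\<exists>x y. k dvd (a * x + b * y - 1)"
  then obtain x y r where r: "a * x + b * y - 1 = k * r" by (auto elim: dvdE)
  have "s dvd (a * x + (b * y - k * r) * 1 - 1)" using r by (simp add: algebra_simps)
  then obtain t u where tu: "s dvd ((a + (b * y - k * r) * t) * u - 1)"
    using q unfolding quotient_stable_range_one_def by blast
  then have "k dvd ((a + (b * y - k * r) * t) * u - 1)" using kd dvd_trans by blast
  moreover have "(a + b * (y * t)) * u - 1 = ((a + (b * y - k * r) * t) * u - 1) + k * (r * t * u)"
    by (simp add: algebra_simps)
  ultimately have "k dvd ((a + b * (y * t)) * u - 1)" by (simp only:) (rule dvd_add, auto)
  then show "\<exists>y u. k dvd ((a + b * y) * u - 1)" by blast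
qed

lemma sr2:
  fixes a b c x y z :: "'a::comm_ring_1"
  assumes ls: "locally_stable TYPE('a)" and h: "a*x+b*y+c*z = 1"
  shows "\<exists>p q U V. (a + c*p)*U + (b+c*q)*V = 1"
proof -
  have "a*x + (b*y+c*z)*1 = 1" using h by (simp add: add.assoc)
  then obtain w where w: "quotient_stable_range_one (a + (b*y+c*z)*w)"
    using ls unfolding locally_stable_def by blast
  define s where "s = a + (b*y+c*z)*w"
  have e0: "a*x + (b*y+c*z) = 1" using h by (simp add: add.assoc)
  have e: "b*y+c*z = 1 - a*x" using e0 by (metis add_diff_cancel_left')
  have "b*(y*(1-w*x)) + c*(z*(1-w*x)) - 1 = (b*y+c*z)*(1-w*x) - 1" by (simp add: algebra_simps)
  also have "\<dots> = (1 - a*x)*(1-w*x) - 1" by (simp only: e)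
  also have "\<dots> = (a + (1 - a*x)*w) * (-x)" by (simp add: algebra_simps)
  also have "\<dots> = s * (-x)" unfolding s_def by (simp only: e)
  finally have "b*(y*(1-w*x)) + c*(z*(1-w*x)) - 1 = s * (-x)" .
  then have "s dvd (b*(y*(1-w*x)) + c*(z*(1-w*x)) - 1)" by (metis dvd_triv_left)
  then obtain p u where "s dvd ((b + c*p)*u - 1)"
    using w unfolding quotient_stable_range_one_def s_def by blast
  then obtain v where v: "(b + c*p)*u - 1 = s*v" by (auto elim: dvdE)
  have "(a + c*(z*w - p*y*w))*(-v) + (b+c*p)*(u - y*w*v) = ((b+c*p)*u - 1) - s*v + 1"
    unfolding s_def by (simp add: algebra_simps)
  then have "(a + c*(z*w - p*y*w))*(-v) + (b+c*p)*(u - y*w*v) = 1" using v by simp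
  then show ?thesis by blast
qed

lemma gen_ideal_mem: "a \<in> S \<Longrightarrow> a \<in> gen_ideal S"
  unfolding gen_ideal_def by (rule CollectI, rule exI[of _ "{a}"], rule exI[of _ "\<lambda>_. 1"], auto)

lemma gen_ideal_pair: "z \<in> gen_ideal {a, b} \<Longrightarrow> \<exists>u v. z = a*u + b*v"
proof -
  assume "z \<in> gen_ideal {a,b}"
  then obtain T f where T: "T \<subseteq> {a,b}" and z: "z = (\<Sum>s\<in>T. f s * s)"
    unfolding gen_ideal_def by auto
  have "T = {} \<or> T = {a} \<or> T = {b} \<or> T = {a,b}" using T by auto
  then show ?thesis
  proof (elim disjE)
    assume "T = {}" then show ?thesis using z by (auto intro!: exI[of _ 0])
  next
    assume "T = {a}" then have "z = a*(f a) + b*0" using z by (simp add: mult.commute)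
    then show ?thesis by blast
  next
    assume "T = {b}" then have "z = a*0 + b*(f b)" using z by (simp add: mult.commute)
    then show ?thesis by blast
  next
    assume Tab: "T = {a,b}"
    show ?thesis
    proof (cases "a = b")
      case True then have "z = a*(f a) + b*0" using z Tab by (simp add: mult.commute)
      then show ?thesis by blast
    next
      case False then have "z = a*(f a) + b*(f b)" using z Tab by (simp add: mult.commute)
      then show ?thesis by blast
    qed
  qed
qed

lemma bezout_pair:
  fixes a b :: "'a::comm_ring_1"
  assumes bz: "bezout_ring TYPE('a)"
  shows "\<exists>d a1 b1 x y. a = d*a1 \<and> b = d*b1 \<and> d = a*x + b*y"
proof -
  have fin: "finite {a,b}" by simp
  obtain d where d: "gen_ideal {a,b} = range (\<lambda>r. d * r)"
    using bz[unfolded bezout_ring_def, rule_format, OF fin] by (elim exE)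
  have "a \<in> range (\<lambda>r. d * r)" using d gen_ideal_mem by blast
  then obtain a1 where A: "a = d*a1" by auto
  have "b \<in> range (\<lambda>r. d * r)" using d gen_ideal_mem by blast
  then obtain b1 where B: "b = d*b1" by auto
  have "d \<in> range (\<lambda>r. d * r)" by (rule range_eqI[of _ _ 1], simp)
  then have "d \<in> gen_ideal {a,b}" using d by simp
  then obtain x y where C: "d = a*x+b*y" by (elim gen_ideal_pair[THEN exE]) blast
  show ?thesis
    by (rule exI[of _ d], rule exI[of _ a1], rule exI[of _ b1], rule exI[of _ x], rule exI[of _ y])
      (intro conjI A B C)
qed

lemma hermite:
  fixes a b :: "'a::comm_ring_1"
  assumes bz: "bezout_ring TYPE('a)" and ls: "locally_stable TYPE('a)"
  shows "\<exists>d a1 b1 u v. a = d*a1 \<and> b = d*b1 \<and> a1*u + b1*v = 1"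
proof -
  obtain d a1 b1 x y where h: "a = d*a1" "b = d*b1" "d = a*x + b*y"
    using bezout_pair[OF bz] by blast
  define t where "t = 1 - a1*x - b1*y"
  have "d * t = d - (d*a1)*x - (d*b1)*y" unfolding t_def by (simp add: algebra_simps)
  also have "\<dots> = d - a*x - b*y" using h(1,2) by simp
  also have "\<dots> = 0" using h(3) by simp
  finally have dt: "d * t = 0" .
  have "a1*x + b1*y + t*1 = 1" unfolding t_def by simp
  then obtain p q U V where pq: "(a1 + t*p)*U + (b1+t*q)*V = 1"
    using sr2[OF ls] by blast
  have "d*(a1+t*p) = d*a1 + (d*t)*p" by (simp add: algebra_simps)
  then have A: "a = d*(a1+t*p)" using h(1) dt by simp
  have "d*(b1+t*q) = d*b1 + (d*t)*q" by (simp add: algebra_simps)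
  then have B: "b = d*(b1+t*q)" using h(2) dt by simp
  show ?thesis
    by (rule exI[of _ d], rule exI[of _ "a1+t*p"], rule exI[of _ "b1+t*q"], rule exI[of _ U], rule exI[of _ V])
      (intro conjI A B pq)
qed



lemma tri:
  fixes a b c X Y Z :: "'a::comm_ring_1"
  assumes bz: "bezout_ring TYPE('a)" and ls: "locally_stable TYPE('a)"
    and h: "a*X + b*Y + c*Z = 1"
  shows "\<exists>x1 x2 y1 y2. x1*y1*a + x1*y2*b + x2*y2*c = 1"
proof -
  have "b*Y + (a*X + c*Z)*1 = 1" using h by (simp add: algebra_simps)
  then obtain w where w: "quotient_stable_range_one (b + (a*X + c*Z)*w)"
    using ls unfolding locally_stable_def by blast
  define b2 where "b2 = b + c*(Z*w)"
  obtain k a3 b3 \<alpha> \<beta> where H: "a = k*a3" "b2 = k*b3" "a3*\<alpha> + b3*\<beta> = 1"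
    using hermite[OF bz ls] by blast
  have bb: "b = k*b3 - c*(Z*w)" using H(2) unfolding b2_def by (simp add: algebra_simps)
  have "b + (a*X + c*Z)*w = k*(a3*(X*w) + b3)" using H(1,2) unfolding b2_def by (simp add: algebra_simps)
  then have qk: "quotient_stable_range_one k" using qsr1_dvd[OF w] by (metis dvd_triv_left)
  define u where "u = -(c*\<beta>)"
  define v where "v = -(c*a3)"
  define p where "p = -((Z - Z*w*Y)*b3)"
  define q where "q = -((Z - Z*w*Y)*\<alpha>)"
  have "u*p + v*q - 1 = c*(Z - Z*w*Y)*(a3*\<alpha> + b3*\<beta>) - 1"
    unfolding u_def v_def p_def q_def by (simp add: algebra_simps)
  also have "\<dots> = c*Z - c*Z*w*Y - 1" using H(3) by (simp add: algebra_simps)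
  also have "\<dots> = c*Z - c*Z*w*Y - (a*X + b*Y + c*Z)" using h by simp
  also have "\<dots> = k*(-(a3*X) - b3*Y)" unfolding bb H(1) by (simp add: algebra_simps)
  finally have "k dvd (u*p + v*q - 1)" by simp
  then obtain t e where "k dvd ((u + v*t)*e - 1)"
    using qk unfolding quotient_stable_range_one_def by blast
  then obtain m where m: "(u + v*t)*e - 1 = k*m" by (auto elim: dvdE)
  have "(-m)*(\<alpha> - b3*t)*a + (-m)*(\<beta> + a3*t)*b + (-e - m*(Z*w))*(\<beta> + a3*t)*c
      = -(m*k)*(a3*\<alpha> + b3*\<beta>) - e*c*(\<beta> + a3*t)"
    unfolding bb H(1) by (simp add: algebra_simps)
  also have "\<dots> = (u + v*t)*e - k*m" using H(3) unfolding u_def v_def by (simp add: algebra_simps)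
  also have "\<dots> = 1" using m by (simp add: algebra_simps)
  finally show ?thesis by blast
qed

lemma gen2:
  fixes a b c d X Y Z W :: "'a::comm_ring_1"
  assumes bz: "bezout_ring TYPE('a)" and ls: "locally_stable TYPE('a)"
    and h: "a*X + b*Y + c*Z + d*W = 1"
  shows "\<exists>x1 x2 y1 y2. x1*y1*a + x1*y2*b + x2*y1*c + x2*y2*d = 1"
proof -
  obtain g a2 c2 \<alpha> \<gamma> where H: "a = g*a2" "c = g*c2" "a2*\<alpha> + c2*\<gamma> = 1"
    using hermite[OF bz ls] by blast
  define t2 where "t2 = \<alpha>*b + \<gamma>*d"
  define t3 where "t3 = -(c2*b) + a2*d"
  have bt: "b = a2*t2 - \<gamma>*t3"
  proof -
    have "a2*t2 - \<gamma>*t3 = b*(a2*\<alpha> + c2*\<gamma>)" unfolding t2_def t3_def by (simp add: algebra_simps)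
    then show ?thesis using H(3) by simp
  qed
  have dt: "d = c2*t2 + \<alpha>*t3"
  proof -
    have "c2*t2 + \<alpha>*t3 = d*(a2*\<alpha> + c2*\<gamma>)" unfolding t2_def t3_def by (simp add: algebra_simps)
    then show ?thesis using H(3) by simp
  qed
  have "g*(a2*X + c2*Z) + t2*(a2*Y + c2*W) + t3*(-(\<gamma>*Y) + \<alpha>*W) = a*X + b*Y + c*Z + d*W"
    unfolding H(1,2) bt dt by (simp add: algebra_simps)
  then have "g*(a2*X + c2*Z) + t2*(a2*Y + c2*W) + t3*(-(\<gamma>*Y) + \<alpha>*W) = 1" using h by simp
  then obtain x1 x2 y1 y2 where xy: "x1*y1*g + x1*y2*t2 + x2*y2*t3 = 1"
    using tri[OF bz ls] by blast
  have "(x1*\<alpha> - x2*c2)*y1*a + (x1*\<alpha> - x2*c2)*y2*b + (x1*\<gamma> + x2*a2)*y1*c + (x1*\<gamma> + x2*a2)*y2*d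
     = x1*y1*g*(a2*\<alpha> + c2*\<gamma>) + x1*y2*t2 + x2*y2*t3"
    unfolding H(1,2) t2_def t3_def by (simp add: algebra_simps)
  also have "\<dots> = 1" using xy H(3) by simp
  finally show ?thesis by blast
qed

lemma two_by_two:
  fixes a b c d :: "'a::comm_ring_1"
  assumes bz: "bezout_ring TYPE('a)" and ls: "locally_stable TYPE('a)"
  shows "\<exists>p1 p2 p3 p4 q1 q2 q3 q4 d1 d2. p1*p4 - p2*p3 = 1 \<and> q1*q4 - q2*q3 = 1 \<and>
    (p1*a+p2*c)*q1 + (p1*b+p2*d)*q3 = d1 \<and> (p1*a+p2*c)*q2 + (p1*b+p2*d)*q4 = 0 \<and>
    (p3*a+p4*c)*q1 + (p3*b+p4*d)*q3 = 0 \<and> (p3*a+p4*c)*q2 + (p3*b+p4*d)*q4 = d2 \<and>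
    d1 dvd d2 \<and> d1 dvd a"
proof -
  obtain e1 a1 b1 u1 v1 where H1: "a = e1*a1" "b = e1*b1" "a1*u1 + b1*v1 = 1"
    using hermite[OF bz ls] by blast
  obtain e2 c1 d1 u2 v2 where H2: "c = e2*c1" "d = e2*d1" "c1*u2 + d1*v2 = 1"
    using hermite[OF bz ls] by blast
  obtain \<delta> f1 f2 u3 v3 where H3: "e1 = \<delta>*f1" "e2 = \<delta>*f2" "f1*u3 + f2*v3 = 1"
    using hermite[OF bz ls] by blast
  define a' where "a' = f1*a1"
  define b' where "b' = f1*b1"
  define c' where "c' = f2*c1"
  define d' where "d' = f2*d1"
  have A: "a = \<delta>*a'" "b = \<delta>*b'" "c = \<delta>*c'" "d = \<delta>*d'"
    unfolding a'_def b'_def c'_def d'_def H1 H2 H3 by (simp_all add: algebra_simps)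
  have "a'*(u1*u3) + b'*(v1*u3) + c'*(u2*v3) + d'*(v2*v3) = f1*u3*(a1*u1 + b1*v1) + f2*v3*(c1*u2 + d1*v2)"
    unfolding a'_def b'_def c'_def d'_def by (simp add: algebra_simps)
  also have "\<dots> = 1" using H1(3) H2(3) H3(3) by simp
  finally obtain x1 x2 y1 y2 where xy: "x1*y1*a' + x1*y2*b' + x2*y1*c' + x2*y2*d' = 1"
    using gen2[OF bz ls] by blast
  define v1' where "v1' = a'*y1 + b'*y2"
  define v2' where "v2' = c'*y1 + d'*y2"
  define w1 where "w1 = x1*a' + x2*c'"
  define w2 where "w2 = x1*b' + x2*d'"
  define m where "m = (-v2'*a' + v1'*c')*(-w2) + (-v2'*b' + v1'*d')*w1"
  have e1: "x1*v1' - x2*(-v2') = 1" using xy unfolding v1'_def v2'_def by (simp add: algebra_simps)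
  have e2: "y1*w1 - (-w2)*y2 = 1" using xy unfolding w1_def w2_def by (simp add: algebra_simps)
  have e3: "(x1*a+x2*c)*y1 + (x1*b+x2*d)*y2 = \<delta>"
  proof -
    have "(x1*a+x2*c)*y1 + (x1*b+x2*d)*y2 = \<delta>*(x1*y1*a' + x1*y2*b' + x2*y1*c' + x2*y2*d')"
      unfolding A by (simp add: algebra_simps)
    then show ?thesis using xy by simp
  qed
  have e4: "(x1*a+x2*c)*(-w2) + (x1*b+x2*d)*w1 = 0"
    unfolding A w1_def w2_def by (simp add: algebra_simps)
  have e5: "(-v2'*a+v1'*c)*y1 + (-v2'*b+v1'*d)*y2 = 0"
    unfolding A v1'_def v2'_def by (simp add: algebra_simps)
  have e6: "(-v2'*a+v1'*c)*(-w2) + (-v2'*b+v1'*d)*w1 = \<delta>*m"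
    unfolding A m_def by (simp add: algebra_simps)
  have e7: "\<delta> dvd \<delta>*m" "\<delta> dvd a" using A by simp_all
  show ?thesis
    apply (rule exI[of _ x1], rule exI[of _ x2], rule exI[of _ "-v2'"], rule exI[of _ v1'])
    apply (rule exI[of _ y1], rule exI[of _ "-w2"], rule exI[of _ y2], rule exI[of _ w1])
    apply (rule exI[of _ \<delta>], rule exI[of _ "\<delta>*m"])
    using e1 e2 e3 e4 e5 e6 e7 by (intro conjI)
qed



definition emb2 :: "nat \<Rightarrow> nat \<Rightarrow> nat \<Rightarrow> 'a \<Rightarrow> 'a \<Rightarrow> 'a \<Rightarrow> 'a \<Rightarrow> 'a::comm_ring_1 mat" where
  "emb2 m i j a b c d = mat m m (\<lambda>(r,s).
     if r = i \<and> s = i then a else if r = i \<and> s = j then b else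
     if r = j \<and> s = i then c else if r = j \<and> s = j then d else
     if r = i \<or> r = j \<or> s = i \<or> s = j then 0 else if r = s then 1 else 0)"

lemma emb2_carrier[simp]: "emb2 m i j a b c d \<in> carrier_mat m m"
  unfolding emb2_def by simp

lemma emb2_dims[simp]: "dim_row (emb2 m i j a b c d) = m" "dim_col (emb2 m i j a b c d) = m"
  unfolding emb2_def by simp_all

lemma emb2_left:
  fixes A :: "'a::comm_ring_1 mat"
  assumes A: "A \<in> carrier_mat m n" and ij: "i < m" "j < m" "i \<noteq> j" and rs: "r < m" "s < n"
  shows "(emb2 m i j a b c d * A) $$ (r,s) =
    (if r = i then a*A$$(i,s) + b*A$$(j,s) else if r = j then c*A$$(i,s) + d*A$$(j,s) else A$$(r,s))"
proof -
  define ei where "ei = (if r = i then a else if r = j then c else 0)"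
  define ej where "ej = (if r = i then b else if r = j then d else 0)"
  have "(emb2 m i j a b c d * A) $$ (r,s) = (\<Sum>k\<in>{0..<m}. emb2 m i j a b c d $$ (r,k) * A $$ (k,s))"
    using A rs by (simp add: scalar_prod_def carrier_matD)
  also have "\<dots> = (\<Sum>k\<in>{0..<m}. (if k = i then ei*A$$(i,s) else 0) + (if k = j then ej*A$$(j,s) else 0)
       + (if k = r then (if r \<noteq> i \<and> r \<noteq> j then A$$(r,s) else 0) else 0))"
    by (rule sum.cong) (use ij rs in \<open>auto simp: emb2_def ei_def ej_def\<close>)
  also have "\<dots> = ei*A$$(i,s) + ej*A$$(j,s) + (if r \<noteq> i \<and> r \<noteq> j then A$$(r,s) else 0)"
    using ij rs by (simp add: sum.distrib)
  finally show ?thesis unfolding ei_def ej_def using ij by auto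
qed

lemma emb2_right:
  fixes A :: "'a::comm_ring_1 mat"
  assumes A: "A \<in> carrier_mat m n" and ij: "i < n" "j < n" "i \<noteq> j" and rs: "r < m" "s < n"
  shows "(A * emb2 n i j a b c d) $$ (r,s) =
    (if s = i then A$$(r,i)*a + A$$(r,j)*c else if s = j then A$$(r,i)*b + A$$(r,j)*d else A$$(r,s))"
proof -
  define ei where "ei = (if s = i then a else if s = j then b else 0)"
  define ej where "ej = (if s = i then c else if s = j then d else 0)"
  have "(A * emb2 n i j a b c d) $$ (r,s) = (\<Sum>k\<in>{0..<n}. A $$ (r,k) * emb2 n i j a b c d $$ (k,s))"
    using A rs by (simp add: scalar_prod_def carrier_matD)
  also have "\<dots> = (\<Sum>k\<in>{0..<n}. (if k = i then A$$(r,i)*ei else 0) + (if k = j then A$$(r,j)*ej else 0)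
       + (if k = s then (if s \<noteq> i \<and> s \<noteq> j then A$$(r,s) else 0) else 0))"
    by (rule sum.cong) (use ij rs in \<open>auto simp: emb2_def ei_def ej_def\<close>)
  also have "\<dots> = A$$(r,i)*ei + A$$(r,j)*ej + (if s \<noteq> i \<and> s \<noteq> j then A$$(r,s) else 0)"
    using ij rs by (simp add: sum.distrib)
  finally show ?thesis unfolding ei_def ej_def using ij by auto
qed

lemma emb2_inv:
  fixes a b c d :: "'a::comm_ring_1"
  assumes det: "a*d - b*c = 1" and ij: "i < m" "j < m" "i \<noteq> j"
  shows "emb2 m i j a b c d * emb2 m i j d (-b) (-c) a = 1\<^sub>m m"
proof (rule eq_matI)
  fix r s assume rs: "r < dim_row (1\<^sub>m m :: 'a mat)" "s < dim_col (1\<^sub>m m :: 'a mat)"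
  then have rs': "r < m" "s < m" by auto
  have e1: "a*d - b*c = 1" "d*a - c*b = 1" "-(b*c) + a*d = 1" "d*a + - (c*b) = 1" using det by (simp_all add: algebra_simps)
  show "(emb2 m i j a b c d * emb2 m i j d (-b) (-c) a) $$ (r, s) = 1\<^sub>m m $$ (r, s)"
    unfolding emb2_left[OF emb2_carrier ij rs']
    using ij rs' e1 by (auto simp: emb2_def algebra_simps)
qed auto

definition inv_mat :: "nat \<Rightarrow> 'a::comm_ring_1 mat \<Rightarrow> bool" where
  "inv_mat n P \<longleftrightarrow> P \<in> carrier_mat n n \<and> (\<exists>P'. P' \<in> carrier_mat n n \<and> P * P' = 1\<^sub>m n \<and> P' * P = 1\<^sub>m n)"

lemma inv_mat_iff: "inv_mat n P \<longleftrightarrow> P \<in> carrier_mat n n \<and> invertible_mat P"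
proof
  assume "inv_mat n P"
  then obtain P' where "P \<in> carrier_mat n n" "P' \<in> carrier_mat n n" "P * P' = 1\<^sub>m n" "P' * P = 1\<^sub>m n"
    unfolding inv_mat_def by blast
  then show "P \<in> carrier_mat n n \<and> invertible_mat P"
    unfolding invertible_mat_def inverts_mat_def square_mat.simps by auto
next
  assume h: "P \<in> carrier_mat n n \<and> invertible_mat P"
  then obtain B where B: "P * B = 1\<^sub>m (dim_row P)" "B * P = 1\<^sub>m (dim_row B)"
    unfolding invertible_mat_def inverts_mat_def by blast
  have P: "P \<in> carrier_mat n n" using h by blast
  have "dim_col B = n" using B(1) P by (metis index_mult_mat(3) index_one_mat(3) carrier_matD(1))
  moreover have "dim_row B = n" using B(2) P by (metis index_mult_mat(3) index_one_mat(3) carrier_matD(2))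
  ultimately have "B \<in> carrier_mat n n" by auto
  then show "inv_mat n P" unfolding inv_mat_def using B P by auto
qed

lemma inv_mat_one: "inv_mat n (1\<^sub>m n)"
  unfolding inv_mat_def by (intro conjI exI[of _ "1\<^sub>m n"]) auto

lemma inv_mat_mult:
  assumes "inv_mat n P" "inv_mat n Q" shows "inv_mat n (P * Q)"
proof -
  obtain P' where P: "P \<in> carrier_mat n n" "P' \<in> carrier_mat n n" "P * P' = 1\<^sub>m n" "P' * P = 1\<^sub>m n"
    using assms(1) unfolding inv_mat_def by blast
  obtain Q' where Q: "Q \<in> carrier_mat n n" "Q' \<in> carrier_mat n n" "Q * Q' = 1\<^sub>m n" "Q' * Q = 1\<^sub>m n"
    using assms(2) unfolding inv_mat_def by blast
  have "P * Q * (Q' * P') = P * (Q * (Q' * P'))"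
    using P Q by (intro assoc_mult_mat[of _ n n _ n _ n]) auto
  also have "Q * (Q' * P') = Q * Q' * P'"
    using P Q by (intro assoc_mult_mat[symmetric, of _ n n _ n _ n]) auto
  also have "P * (Q * Q' * P') = 1\<^sub>m n" using P Q by simp
  finally have 1: "P * Q * (Q' * P') = 1\<^sub>m n" .
  have "Q' * P' * (P * Q) = Q' * (P' * (P * Q))"
    using P Q by (intro assoc_mult_mat[of _ n n _ n _ n]) auto
  also have "P' * (P * Q) = P' * P * Q"
    using P Q by (intro assoc_mult_mat[symmetric, of _ n n _ n _ n]) auto
  also have "Q' * (P' * P * Q) = 1\<^sub>m n" using P Q by simp
  finally have 2: "Q' * P' * (P * Q) = 1\<^sub>m n" .
  show ?thesis unfolding inv_mat_def using 1 2 P Q by (intro conjI exI[of _ "Q' * P'"]) auto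
qed

lemma inv_mat_emb2:
  fixes a b c d :: "'a::comm_ring_1"
  assumes det: "a*d - b*c = 1" and ij: "i < m" "j < m" "i \<noteq> j"
  shows "inv_mat m (emb2 m i j a b c d)"
proof -
  have det2: "d*a - (-b)*(-c) = 1" using det by (simp add: algebra_simps)
  have "emb2 m i j d (-b) (-c) a * emb2 m i j a (-(-b)) (-(-c)) d = 1\<^sub>m m"
    by (rule emb2_inv[OF det2 ij])
  then have "emb2 m i j d (-b) (-c) a * emb2 m i j a b c d = 1\<^sub>m m" by simp
  then show ?thesis unfolding inv_mat_def using emb2_inv[OF det ij]
    by (intro conjI exI[of _ "emb2 m i j d (-b) (-c) a"]) auto
qed

definition eqv :: "nat \<Rightarrow> nat \<Rightarrow> 'a::comm_ring_1 mat \<Rightarrow> 'a mat \<Rightarrow> bool" where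
  "eqv m n A B \<longleftrightarrow> A \<in> carrier_mat m n \<and> (\<exists>P Q. inv_mat m P \<and> inv_mat n Q \<and> B = P * A * Q)"

lemma eqv_refl: "A \<in> carrier_mat m n \<Longrightarrow> eqv m n A A"
  unfolding eqv_def using inv_mat_one[of m] inv_mat_one[of n] by force

lemma eqv_carrier: "eqv m n A B \<Longrightarrow> B \<in> carrier_mat m n"
  unfolding eqv_def inv_mat_def by auto

lemma eqv_trans:
  assumes "eqv m n A B" "eqv m n B C" shows "eqv m n A C"
proof -
  obtain P Q where A: "A \<in> carrier_mat m n" and PQ: "inv_mat m P" "inv_mat n Q" "B = P * A * Q"
    using assms(1) unfolding eqv_def by blast
  obtain P2 Q2 where PQ2: "inv_mat m P2" "inv_mat n Q2" "C = P2 * B * Q2"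
    using assms(2) unfolding eqv_def by blast
  have c: "P \<in> carrier_mat m m" "Q \<in> carrier_mat n n" "P2 \<in> carrier_mat m m" "Q2 \<in> carrier_mat n n"
    using PQ PQ2 unfolding inv_mat_def by auto
  have "C = (P2 * P) * A * (Q * Q2)"
    unfolding PQ2(3) PQ(3) using c A
    by (smt (verit) assoc_mult_mat mult_carrier_mat)
  then show ?thesis unfolding eqv_def using A inv_mat_mult PQ PQ2 by blast
qed

lemma eqv_left: "A \<in> carrier_mat m n \<Longrightarrow> inv_mat m P \<Longrightarrow> eqv m n A (P * A)"
  unfolding eqv_def using inv_mat_one[of n] by (intro conjI exI[of _ P] exI[of _ "1\<^sub>m n"]) (auto simp: inv_mat_def)

lemma eqv_right: "A \<in> carrier_mat m n \<Longrightarrow> inv_mat n Q \<Longrightarrow> eqv m n A (A * Q)"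
  unfolding eqv_def using inv_mat_one[of m] by (intro conjI exI[of _ "1\<^sub>m m"] exI[of _ Q]) (auto simp: inv_mat_def)

lemma dvd_mult_mat_left:
  fixes A :: "'a::comm_ring_1 mat"
  assumes P: "P \<in> carrier_mat k m" and A: "A \<in> carrier_mat m n" and j: "j < n" and i: "i < k"
    and dv: "\<And>i'. i' < m \<Longrightarrow> g dvd A $$ (i', j)"
  shows "g dvd (P * A) $$ (i, j)"
proof -
  have "(P * A) $$ (i, j) = (\<Sum>l\<in>{0..<m}. P $$ (i,l) * A $$ (l,j))"
    using P A i j by (simp add: scalar_prod_def)
  also have "g dvd \<dots>" by (rule dvd_sum) (use dv in auto)
  finally show ?thesis .
qed

lemma dvd_mult_mat_right:
  fixes A :: "'a::comm_ring_1 mat"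
  assumes Q: "Q \<in> carrier_mat n l" and A: "A \<in> carrier_mat m n" and j: "j < l" and i: "i < m"
    and dv: "\<And>j'. j' < n \<Longrightarrow> g dvd A $$ (i, j')"
  shows "g dvd (A * Q) $$ (i, j)"
proof -
  have "(A * Q) $$ (i, j) = (\<Sum>l\<in>{0..<n}. A $$ (i,l) * Q $$ (l,j))"
    using Q A i j by (simp add: scalar_prod_def)
  also have "g dvd \<dots>" by (rule dvd_sum) (use dv in auto)
  finally show ?thesis .
qed

lemma dvd_mult_mat_both:
  fixes A :: "'a::comm_ring_1 mat"
  assumes P: "P \<in> carrier_mat k m" and A: "A \<in> carrier_mat m n" and Q: "Q \<in> carrier_mat n l"
    and dv: "\<And>i j. i < m \<Longrightarrow> j < n \<Longrightarrow> g dvd A $$ (i, j)"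
    and ij: "i < k" "j < l"
  shows "g dvd (P * A * Q) $$ (i, j)"
proof (rule dvd_mult_mat_right[OF Q _ ij(2) ij(1)])
  show "P * A \<in> carrier_mat k n" using P A by simp
  fix j' assume "j' < n"
  then show "g dvd (P * A) $$ (i, j')" using dvd_mult_mat_left[OF P A _ ij(1)] dv by blast
qed



lemma emb2_left_assoc:
  fixes A :: "'a::comm_ring_1 mat"
  assumes "P \<in> carrier_mat m m" "A \<in> carrier_mat m n"
  shows "emb2 m i j a b c d * P * A = emb2 m i j a b c d * (P * A)"
  using assms by (intro assoc_mult_mat) auto

lemma hermite_col:
  fixes A :: "'a::comm_ring_1 mat"
  assumes bz: "bezout_ring TYPE('a)" and ls: "locally_stable TYPE('a)"
    and A: "A \<in> carrier_mat m n" and b0: "b0 < m" and k: "k < n"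
  shows "\<exists>P. inv_mat m P \<and> (\<forall>i<b0. \<forall>j<n. (P*A)$$(i,j) = A$$(i,j)) \<and>
            (\<forall>i. b0 < i \<and> i < m \<longrightarrow> (P*A)$$(i,k) = 0)"
proof -
  have "\<forall>r. r \<le> m \<longrightarrow> (\<exists>P. inv_mat m P \<and> (\<forall>i<b0. \<forall>j<n. (P*A)$$(i,j) = A$$(i,j)) \<and>
            (\<forall>i. b0 < i \<and> i < r \<longrightarrow> (P*A)$$(i,k) = 0))"
  proof (intro allI)
    fix r show "r \<le> m \<longrightarrow> (\<exists>P. inv_mat m P \<and> (\<forall>i<b0. \<forall>j<n. (P*A)$$(i,j) = A$$(i,j)) \<and>
            (\<forall>i. b0 < i \<and> i < r \<longrightarrow> (P*A)$$(i,k) = 0))"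
    proof (induction r)
      case 0
      show ?case using inv_mat_one[of m] A by (intro impI exI[of _ "1\<^sub>m m"]) auto
    next
      case (Suc r)
      show ?case
      proof
        assume r: "Suc r \<le> m"
        then obtain P where P: "inv_mat m P" "\<forall>i<b0. \<forall>j<n. (P*A)$$(i,j) = A$$(i,j)"
          "\<forall>i. b0 < i \<and> i < r \<longrightarrow> (P*A)$$(i,k) = 0" using Suc by auto
        show "\<exists>P. inv_mat m P \<and> (\<forall>i<b0. \<forall>j<n. (P*A)$$(i,j) = A$$(i,j)) \<and>
            (\<forall>i. b0 < i \<and> i < Suc r \<longrightarrow> (P*A)$$(i,k) = 0)"
        proof (cases "r \<le> b0")
          case True
          then show ?thesis using P by (intro exI[of _ P]) auto
        next
          case False
          define B where "B = P * A"
          have Pc: "P \<in> carrier_mat m m" using P(1) unfolding inv_mat_def by blast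
          have Bc: "B \<in> carrier_mat m n" unfolding B_def using Pc A by simp
          obtain dd a1 b1 u v where H: "B$$(b0,k) = dd*a1" "B$$(r,k) = dd*b1" "a1*u + b1*v = 1"
            using hermite[OF bz ls] by blast
          have det: "u*a1 - v*(-b1) = 1" using H(3) by (simp add: algebra_simps)
          have ij: "b0 < m" "r < m" "b0 \<noteq> r" using b0 r False by auto
          define E where "E = emb2 m b0 r u v (-b1) a1"
          have Einv: "inv_mat m E" unfolding E_def by (rule inv_mat_emb2[OF det ij])
          have EPA: "E * P * A = E * B" unfolding B_def E_def using Pc A by (rule emb2_left_assoc)
          have ent: "\<And>i j. i < m \<Longrightarrow> j < n \<Longrightarrow> (E * B) $$ (i,j) =
            (if i = b0 then u*B$$(b0,j) + v*B$$(r,j) else if i = r then (-b1)*B$$(b0,j) + a1*B$$(r,j) else B$$(i,j))"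
            unfolding E_def by (rule emb2_left[OF Bc ij])
          show ?thesis
          proof (intro exI[of _ "E * P"] conjI allI impI)
            show "inv_mat m (E * P)" using inv_mat_mult[OF Einv P(1)] .
          next
            fix i j assume "i < b0" "j < n"
            then show "(E * P * A) $$ (i, j) = A $$ (i, j)"
              unfolding EPA using ent[of i j] P(2) b0 False unfolding B_def by auto
          next
            fix i assume i: "b0 < i \<and> i < Suc r"
            show "(E * P * A) $$ (i, k) = 0"
            proof (cases "i = r")
              case True
              then show ?thesis unfolding EPA using ent[of i k] i r k H(1,2) ij
                by (simp add: algebra_simps)
            next
              case False
              then show ?thesis unfolding EPA using ent[of i k] i r k P(3) unfolding B_def by auto
            qed
          qed
        qed
      qed
    qed
  qed
  then show ?thesis by auto
qed



lemma emb2_both: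
  fixes B :: "'a::comm_ring_1 mat"
  assumes Bc: "B \<in> carrier_mat m n" and ij: "i < m" "i' < m" "i \<noteq> i'" and kl: "k < n" "l < n" "k \<noteq> l"
    and rs: "r < m" "s < n"
  shows "(emb2 m i i' p1 p2 p3 p4 * B * emb2 n k l q1 q2 q3 q4) $$ (r,s) =
   (let X = (\<lambda>s. if r = i then p1*B$$(i,s) + p2*B$$(i',s) else if r = i' then p3*B$$(i,s) + p4*B$$(i',s) else B$$(r,s))
    in if s = k then X k * q1 + X l * q3 else if s = l then X k * q2 + X l * q4 else X s)"
proof -
  have Xc: "emb2 m i i' p1 p2 p3 p4 * B \<in> carrier_mat m n" by (rule mult_carrier_mat[OF emb2_carrier Bc])
  define X where "X = (\<lambda>s. if r = i then p1*B$$(i,s) + p2*B$$(i',s) else if r = i' then p3*B$$(i,s) + p4*B$$(i',s) else B$$(r,s))"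
  have hX: "\<And>s. s < n \<Longrightarrow> (emb2 m i i' p1 p2 p3 p4 * B) $$ (r,s) = X s"
    unfolding X_def by (rule emb2_left[OF Bc ij rs(1)])
  show ?thesis
    unfolding emb2_right[OF Xc kl rs] hX[OF kl(1)] hX[OF kl(2)] hX[OF rs(2)] Let_def X_def ..
qed

lemma pivot:
  fixes A :: "'a::comm_ring_1 mat"
  assumes bz: "bezout_ring TYPE('a)" and ls: "locally_stable TYPE('a)"
    and A: "A \<in> carrier_mat m n" and m: "0 < m" and n: "0 < n"
  shows "\<exists>B. eqv m n A B \<and> (\<forall>i<m. \<forall>j<n. B$$(0,0) dvd B$$(i,j))"
proof -
  have "\<forall>kk. 1 \<le> kk \<and> kk \<le> n \<longrightarrow> (\<exists>B. eqv m n A B \<and> (\<forall>i<m. \<forall>j<kk. B$$(0,0) dvd B$$(i,j)))"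
  proof (intro allI)
    fix kk show "1 \<le> kk \<and> kk \<le> n \<longrightarrow> (\<exists>B. eqv m n A B \<and> (\<forall>i<m. \<forall>j<kk. B$$(0,0) dvd B$$(i,j)))"
    proof (induction kk)
      case 0 then show ?case by simp
    next
      case (Suc kk)
      show ?case
      proof
        assume kk: "1 \<le> Suc kk \<and> Suc kk \<le> n"
        show "\<exists>B. eqv m n A B \<and> (\<forall>i<m. \<forall>j<Suc kk. B$$(0,0) dvd B$$(i,j))"
        proof (cases "kk = 0")
          case True
          obtain P where P: "inv_mat m P" "\<forall>i. 0 < i \<and> i < m \<longrightarrow> (P*A)$$(i,0) = 0"
            using hermite_col[OF bz ls A m n] by blast
          show ?thesis
          proof (intro exI[of _ "P * A"] conjI allI impI)
            show "eqv m n A (P * A)" by (rule eqv_left[OF A P(1)])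
          next
            fix i j assume "i < m" "j < Suc kk"
            then show "(P * A) $$ (0, 0) dvd (P * A) $$ (i, j)" using True P(2)
              by (cases "i = 0") auto
          qed
        next
          case False
          then obtain B where B: "eqv m n A B" "\<forall>i<m. \<forall>j<kk. B$$(0,0) dvd B$$(i,j)"
            using Suc kk by auto
          define k where "k = kk"
          have k: "0 < k" "k < n" using False kk unfolding k_def by auto
          have Bc: "B \<in> carrier_mat m n" using eqv_carrier[OF B(1)] .
          show ?thesis
          proof (cases "m = 1")
            case True
            obtain dd a1 b1 u v where H: "B$$(0,0) = dd*a1" "B$$(0,k) = dd*b1" "a1*u + b1*v = 1"
              using hermite[OF bz ls] by blast
            have det: "u*a1 - (-b1)*v = 1" using H(3) by (simp add: algebra_simps)
            have kl: "0 < n" "k < n" "0 \<noteq> k" using k by auto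
            define E where "E = emb2 n 0 k u (-b1) v a1"
            have Einv: "inv_mat n E" unfolding E_def by (rule inv_mat_emb2[OF det kl])
            have ent: "\<And>i j. i < m \<Longrightarrow> j < n \<Longrightarrow> (B * E) $$ (i,j) =
              (if j = 0 then B$$(i,0)*u + B$$(i,k)*v else if j = k then B$$(i,0)*(-b1) + B$$(i,k)*a1 else B$$(i,j))"
              unfolding E_def by (rule emb2_right[OF Bc kl])
            have "(B * E) $$ (0,0) = B$$(0,0)*u + B$$(0,k)*v"
              using ent[of 0 0] m n by simp
            also have "\<dots> = dd*(a1*u + b1*v)" unfolding H(1,2) by (simp add: algebra_simps)
            finally have e00: "(B * E) $$ (0,0) = dd" using H(3) by simp
            show ?thesis
            proof (intro exI[of _ "B * E"] conjI allI impI)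
              show "eqv m n A (B * E)" by (rule eqv_trans[OF B(1) eqv_right[OF Bc Einv]])
            next
              fix i j assume ij: "i < m" "j < Suc kk"
              then have i0: "i = 0" using True by auto
              have jn: "j < n" using ij kk by auto
              show "(B * E) $$ (0, 0) dvd (B * E) $$ (i, j)"
              proof (cases "j = 0")
                case True then show ?thesis using i0 by simp
              next
                case j0: False
                show ?thesis
                proof (cases "j = k")
                  case True
                  then show ?thesis using ent[of 0 k] i0 m k H by (simp add: algebra_simps)
                next
                  case False
                  then have "j < kk" using ij k_def by auto
                  then have "B$$(0,0) dvd B$$(0,j)" using B(2) m by auto
                  then have "dd dvd B$$(0,j)" using H(1) by (metis dvd_mult_left)
                  then show ?thesis using ent[of 0 j] e00 i0 m jn j0 False by simp
                qed
              qed
            qed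
          next
            case False
            then have m2: "1 < m" using m by auto
            obtain P where P: "inv_mat m P" "\<forall>i<1. \<forall>j<n. (P*B)$$(i,j) = B$$(i,j)"
              "\<forall>i. 1 < i \<and> i < m \<longrightarrow> (P*B)$$(i,k) = 0"
              using hermite_col[OF bz ls Bc m2 k(2)] by blast
            define B1 where "B1 = P * B"
            have Pc: "P \<in> carrier_mat m m" using P(1) unfolding inv_mat_def by blast
            have B1c: "B1 \<in> carrier_mat m n" unfolding B1_def using Pc Bc by simp
            have B1row0: "\<And>j. j < n \<Longrightarrow> B1$$(0,j) = B$$(0,j)" using P(2) unfolding B1_def by auto
            have B1z: "\<And>i. 1 < i \<Longrightarrow> i < m \<Longrightarrow> B1$$(i,k) = 0" using P(3) unfolding B1_def by auto
            have B1d: "\<And>i j. i < m \<Longrightarrow> j < kk \<Longrightarrow> B1$$(0,0) dvd B1$$(i,j)"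
            proof -
              fix i j assume ij: "i < m" "j < kk"
              have "B$$(0,0) dvd (P*B)$$(i,j)"
                by (rule dvd_mult_mat_left[OF Pc Bc _ ij(1)]) (use ij kk B(2) in auto)
              then show "B1$$(0,0) dvd B1$$(i,j)" using B1row0 n unfolding B1_def by simp
            qed
            obtain p1 p2 p3 p4 q1 q2 q3 q4 d1 d2 where T:
              "p1*p4 - p2*p3 = 1" "q1*q4 - q2*q3 = 1"
              "(p1*B1$$(0,0)+p2*B1$$(1,0))*q1 + (p1*B1$$(0,k)+p2*B1$$(1,k))*q3 = d1"
              "(p1*B1$$(0,0)+p2*B1$$(1,0))*q2 + (p1*B1$$(0,k)+p2*B1$$(1,k))*q4 = 0"
              "(p3*B1$$(0,0)+p4*B1$$(1,0))*q1 + (p3*B1$$(0,k)+p4*B1$$(1,k))*q3 = 0"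
              "(p3*B1$$(0,0)+p4*B1$$(1,0))*q2 + (p3*B1$$(0,k)+p4*B1$$(1,k))*q4 = d2"
              "d1 dvd d2" "d1 dvd B1$$(0,0)"
              using two_by_two[OF bz ls, where a="B1$$(0,0)" and b="B1$$(0,k)" and c="B1$$(1,0)" and d="B1$$(1,k)"]
              by blast
            have ij: "0 < m" "1 < m" "(0::nat) \<noteq> 1" using m2 by auto
            have kl: "0 < n" "k < n" "0 \<noteq> k" using k by auto
            define EP where "EP = emb2 m 0 1 p1 p2 p3 p4"
            define EQ where "EQ = emb2 n 0 k q1 q2 q3 q4"
            have EPi: "inv_mat m EP" unfolding EP_def by (rule inv_mat_emb2[OF T(1) ij])
            have EQi: "inv_mat n EQ" unfolding EQ_def by (rule inv_mat_emb2[OF T(2) kl])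
            define B2 where "B2 = EP * B1 * EQ"
            have eqvB2: "eqv m n A B2"
            proof -
              have "eqv m n B B1" unfolding B1_def by (rule eqv_left[OF Bc P(1)])
              moreover have "eqv m n B1 (EP * B1)" by (rule eqv_left[OF B1c EPi])
              moreover have "eqv m n (EP * B1) B2" unfolding B2_def
                by (rule eqv_right[OF _ EQi]) (unfold EP_def, rule mult_carrier_mat[OF emb2_carrier B1c])
              ultimately show ?thesis using B(1) eqv_trans by blast
            qed
            have ent: "\<And>r s. r < m \<Longrightarrow> s < n \<Longrightarrow> B2 $$ (r,s) =
              (let X = (\<lambda>s. if r = 0 then p1*B1$$(0,s) + p2*B1$$(1,s) else if r = 1 then p3*B1$$(0,s) + p4*B1$$(1,s) else B1$$(r,s))
               in if s = 0 then X 0 * q1 + X k * q3 else if s = k then X 0 * q2 + X k * q4 else X s)"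
              unfolding B2_def EP_def EQ_def by (rule emb2_both[OF B1c ij kl])
            have b00: "B2$$(0,0) = d1" using ent[of 0 0] m n T(3) by simp
            show ?thesis
            proof (intro exI[of _ B2] conjI allI impI)
              show "eqv m n A B2" by (rule eqvB2)
            next
              fix i j assume ijm: "i < m" "j < Suc kk"
              have jn: "j < n" using ijm kk by auto
              have g: "d1 dvd B1$$(0,0)" using T(8) .
              have col: "\<And>i' j'. i' < m \<Longrightarrow> j' < kk \<Longrightarrow> d1 dvd B1$$(i',j')"
                using B1d g dvd_trans by blast
              show "B2 $$ (0, 0) dvd B2 $$ (i, j)"
                unfolding b00 ent[OF ijm(1) jn] Let_def
              proof -
                consider "j = 0" | "j = k" | "0 < j \<and> j < kk \<and> j \<noteq> k"
                  using ijm k_def by linarith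
                then show "d1 dvd (if j = 0 then (if i = 0 then p1 * B1 $$ (0, 0) + p2 * B1 $$ (1, 0) else if i = 1 then p3 * B1 $$ (0, 0) + p4 * B1 $$ (1, 0) else B1 $$ (i, 0)) * q1 +
                   (if i = 0 then p1 * B1 $$ (0, k) + p2 * B1 $$ (1, k) else if i = 1 then p3 * B1 $$ (0, k) + p4 * B1 $$ (1, k) else B1 $$ (i, k)) * q3
          else if j = k then (if i = 0 then p1 * B1 $$ (0, 0) + p2 * B1 $$ (1, 0) else if i = 1 then p3 * B1 $$ (0, 0) + p4 * B1 $$ (1, 0) else B1 $$ (i, 0)) * q2 +
                  (if i = 0 then p1 * B1 $$ (0, k) + p2 * B1 $$ (1, k) else if i = 1 then p3 * B1 $$ (0, k) + p4 * B1 $$ (1, k) else B1 $$ (i, k)) * q4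
               else if i = 0 then p1 * B1 $$ (0, j) + p2 * B1 $$ (1, j) else if i = 1 then p3 * B1 $$ (0, j) + p4 * B1 $$ (1, j) else B1 $$ (i, j))"
                proof cases
                  case 1
                  have c0: "d1 dvd B1$$(i,0)" using col[of i 0] ijm False k_def k by auto
                  show ?thesis using 1 T(3,5) B1z[of i] ijm c0 by auto
                next
                  case 2
                  have c0: "d1 dvd B1$$(i,0)" using col[of i 0] ijm k_def k by auto
                  show ?thesis using 2 T(4,6,7) B1z[of i] ijm c0 k by auto
                next
                  case 3
                  have c1: "d1 dvd B1$$(0,j)" "d1 dvd B1$$(1,j)" "d1 dvd B1$$(i,j)"
                    using col[of 0 j] col[of 1 j] col[of i j] ijm m2 3 by auto
                  show ?thesis using 3 c1 by auto
                qed
              qed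
            qed
          qed
        qed
      qed
    qed
  qed
  then show ?thesis using n by (metis One_nat_def Suc_leI order_refl)
qed



definition addc :: "nat \<Rightarrow> (nat \<Rightarrow> 'a) \<Rightarrow> 'a::comm_ring_1 mat" where
  "addc m q = mat m m (\<lambda>(i,j). if i = j then 1 else if j = 0 then q i else 0)"

definition addr :: "nat \<Rightarrow> (nat \<Rightarrow> 'a) \<Rightarrow> 'a::comm_ring_1 mat" where
  "addr n q = mat n n (\<lambda>(i,j). if i = j then 1 else if i = 0 then q j else 0)"

lemma addc_carrier[simp]: "addc m q \<in> carrier_mat m m" unfolding addc_def by simp
lemma addr_carrier[simp]: "addr m q \<in> carrier_mat m m" unfolding addr_def by simp
lemma addc_dims[simp]: "dim_row (addc m q) = m" "dim_col (addc m q) = m" unfolding addc_def by simp_all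
lemma addr_dims[simp]: "dim_row (addr m q) = m" "dim_col (addr m q) = m" unfolding addr_def by simp_all

lemma addc_left:
  fixes X :: "'a::comm_ring_1 mat"
  assumes X: "X \<in> carrier_mat m n" and rs: "r < m" "s < n"
  shows "(addc m q * X) $$ (r,s) = X$$(r,s) + (if r = 0 then 0 else q r * X$$(0,s))"
proof -
  have "(addc m q * X) $$ (r,s) = (\<Sum>k\<in>{0..<m}. addc m q $$ (r,k) * X $$ (k,s))"
    using X rs by (simp add: scalar_prod_def carrier_matD)
  also have "\<dots> = (\<Sum>k\<in>{0..<m}. (if k = r then X$$(r,s) else 0) + (if k = 0 then (if r = 0 then 0 else q r * X$$(0,s)) else 0))"
    by (rule sum.cong) (use rs in \<open>auto simp: addc_def\<close>)
  also have "\<dots> = X$$(r,s) + (if r = 0 then 0 else q r * X$$(0,s))"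
    using rs by (simp add: sum.distrib)
  finally show ?thesis .
qed

lemma addr_right:
  fixes X :: "'a::comm_ring_1 mat"
  assumes X: "X \<in> carrier_mat m n" and rs: "r < m" "s < n"
  shows "(X * addr n q) $$ (r,s) = X$$(r,s) + (if s = 0 then 0 else X$$(r,0) * q s)"
proof -
  have "(X * addr n q) $$ (r,s) = (\<Sum>k\<in>{0..<n}. X $$ (r,k) * addr n q $$ (k,s))"
    using X rs by (simp add: scalar_prod_def carrier_matD)
  also have "\<dots> = (\<Sum>k\<in>{0..<n}. (if k = s then X$$(r,s) else 0) + (if k = 0 then (if s = 0 then 0 else X$$(r,0) * q s) else 0))"
    by (rule sum.cong) (use rs in \<open>auto simp: addr_def\<close>)
  also have "\<dots> = X$$(r,s) + (if s = 0 then 0 else X$$(r,0) * q s)"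
    using rs by (simp add: sum.distrib)
  finally show ?thesis .
qed

lemma addc_mult_inv: "addc m q * addc m (\<lambda>i. - q i) = (1\<^sub>m m :: 'a::comm_ring_1 mat)"
proof (rule eq_matI)
  fix r s assume rs: "r < dim_row (1\<^sub>m m :: 'a mat)" "s < dim_col (1\<^sub>m m :: 'a mat)"
  then have rs': "r < m" "s < m" by auto
  show "(addc m q * addc m (\<lambda>i. - q i)) $$ (r, s) = 1\<^sub>m m $$ (r, s)"
    unfolding addc_left[OF addc_carrier rs'] using rs' by (auto simp: addc_def)
qed auto

lemma addr_mult_inv: "addr m q * addr m (\<lambda>i. - q i) = (1\<^sub>m m :: 'a::comm_ring_1 mat)"
proof (rule eq_matI)
  fix r s assume rs: "r < dim_row (1\<^sub>m m :: 'a mat)" "s < dim_col (1\<^sub>m m :: 'a mat)"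
  then have rs': "r < m" "s < m" by auto
  show "(addr m q * addr m (\<lambda>i. - q i)) $$ (r, s) = 1\<^sub>m m $$ (r, s)"
    unfolding addr_right[OF addr_carrier rs'] using rs' by (auto simp: addr_def)
qed auto

lemma inv_mat_addc: "inv_mat m (addc m (q::nat \<Rightarrow> 'a::comm_ring_1))"
  unfolding inv_mat_def using addc_mult_inv[of m q] addc_mult_inv[of m "\<lambda>i. - q i"]
  by (intro conjI exI[of _ "addc m (\<lambda>i. - q i)"]) auto

lemma inv_mat_addr: "inv_mat m (addr m (q::nat \<Rightarrow> 'a::comm_ring_1))"
  unfolding inv_mat_def using addr_mult_inv[of m q] addr_mult_inv[of m "\<lambda>i. - q i"]
  by (intro conjI exI[of _ "addr m (\<lambda>i. - q i)"]) auto

lemma clear: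
  fixes C :: "'a::comm_ring_1 mat"
  assumes C: "C \<in> carrier_mat m n" and m: "0 < m" and n: "0 < n"
    and dv: "\<forall>i<m. \<forall>j<n. C$$(0,0) dvd C$$(i,j)"
  shows "\<exists>C'. eqv m n C C' \<and> C'$$(0,0) = C$$(0,0) \<and> (\<forall>i. 0 < i \<and> i < m \<longrightarrow> C'$$(i,0) = 0)
     \<and> (\<forall>j. 0 < j \<and> j < n \<longrightarrow> C'$$(0,j) = 0) \<and> (\<forall>i<m. \<forall>j<n. C$$(0,0) dvd C'$$(i,j))"
proof -
  define g where "g = C$$(0,0)"
  define qr where "qr = (\<lambda>i. SOME t. C$$(i,0) = g*t)"
  define qc where "qc = (\<lambda>j. SOME t. C$$(0,j) = g*t)"
  have qr: "\<And>i. i < m \<Longrightarrow> C$$(i,0) = g * qr i"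
  proof -
    fix i assume "i < m"
    then have "C$$(0,0) dvd C$$(i,0)" using dv n by blast
    then have "\<exists>t. C$$(i,0) = g*t" unfolding g_def dvd_def .
    then show "C$$(i,0) = g * qr i" unfolding qr_def by (rule someI_ex)
  qed
  have qc: "\<And>j. j < n \<Longrightarrow> C$$(0,j) = g * qc j"
  proof -
    fix j assume "j < n"
    then have "C$$(0,0) dvd C$$(0,j)" using dv m by blast
    then have "\<exists>t. C$$(0,j) = g*t" unfolding g_def dvd_def .
    then show "C$$(0,j) = g * qc j" unfolding qc_def by (rule someI_ex)
  qed
  define L where "L = addc m (\<lambda>i. - qr i)"
  define R where "R = addr n (\<lambda>j. - qc j)"
  define Y where "Y = L * C"
  have Yc: "Y \<in> carrier_mat m n" unfolding Y_def L_def by (rule mult_carrier_mat[OF addc_carrier C])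
  have Yent: "\<And>r s. r < m \<Longrightarrow> s < n \<Longrightarrow> Y$$(r,s) = C$$(r,s) + (if r = 0 then 0 else - qr r * C$$(0,s))"
    unfolding Y_def L_def by (rule addc_left[OF C])
  have Fent: "\<And>r s. r < m \<Longrightarrow> s < n \<Longrightarrow> (Y * R)$$(r,s) = Y$$(r,s) + (if s = 0 then 0 else Y$$(r,0) * - qc s)"
    unfolding R_def by (rule addr_right[OF Yc])
  show ?thesis
  proof (intro exI[of _ "Y * R"] conjI allI impI)
    show "eqv m n C (Y * R)"
    proof -
      have "eqv m n C Y" unfolding Y_def L_def by (rule eqv_left[OF C inv_mat_addc])
      moreover have "eqv m n Y (Y * R)" unfolding R_def by (rule eqv_right[OF Yc inv_mat_addr])
      ultimately show ?thesis by (rule eqv_trans)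
    qed
  next
    show "(Y * R) $$ (0, 0) = C $$ (0, 0)" using Fent[of 0 0] Yent[of 0 0] m n by simp
  next
    fix i assume i: "0 < i \<and> i < m"
    show "(Y * R) $$ (i, 0) = 0" using Fent[of i 0] Yent[of i 0] i n qr[of i] qr[of 0]
      unfolding g_def by (simp add: algebra_simps)
  next
    fix j assume j: "0 < j \<and> j < n"
    show "(Y * R) $$ (0, j) = 0" using Fent[of 0 j] Yent[of 0 j] Yent[of 0 0] j m qc[of j]
      unfolding g_def by (simp add: algebra_simps)
  next
    fix i j assume ij: "i < m" "j < n"
    show "C $$ (0, 0) dvd (Y * R) $$ (i, j)" unfolding Y_def
      by (rule dvd_mult_mat_both[OF _ C _ _ ij]) (use dv in \<open>auto simp: L_def R_def\<close>)
  qed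
qed



lemma inv_mat_block:
  fixes P :: "'a::comm_ring_1 mat"
  assumes P: "inv_mat k P"
  shows "inv_mat (Suc k) (four_block_mat (1\<^sub>m 1) (0\<^sub>m 1 k) (0\<^sub>m k 1) P)"
proof -
  obtain P' where PP: "P \<in> carrier_mat k k" "P' \<in> carrier_mat k k" "P * P' = 1\<^sub>m k" "P' * P = 1\<^sub>m k"
    using P unfolding inv_mat_def by blast
  have prod: "\<And>X Y. X \<in> carrier_mat k k \<Longrightarrow> Y \<in> carrier_mat k k \<Longrightarrow> X * Y = 1\<^sub>m k \<Longrightarrow>
     four_block_mat (1\<^sub>m 1) (0\<^sub>m 1 k) (0\<^sub>m k 1) X * four_block_mat (1\<^sub>m 1) (0\<^sub>m 1 k) (0\<^sub>m k 1) Y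
     = (1\<^sub>m (Suc k) :: 'a mat)"
  proof -
    fix X Y :: "'a mat" assume XY: "X \<in> carrier_mat k k" "Y \<in> carrier_mat k k" "X * Y = 1\<^sub>m k"
    have "four_block_mat (1\<^sub>m 1) (0\<^sub>m 1 k) (0\<^sub>m k 1) X * four_block_mat (1\<^sub>m 1) (0\<^sub>m 1 k) (0\<^sub>m k 1) Y
      = four_block_mat (1\<^sub>m 1 * 1\<^sub>m 1 + 0\<^sub>m 1 k * 0\<^sub>m k 1) (1\<^sub>m 1 * 0\<^sub>m 1 k + 0\<^sub>m 1 k * Y)
          (0\<^sub>m k 1 * 1\<^sub>m 1 + X * 0\<^sub>m k 1) (0\<^sub>m k 1 * 0\<^sub>m 1 k + X * Y)"
      by (rule mult_four_block_mat) (use XY in auto)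
    also have "\<dots> = four_block_mat (1\<^sub>m 1) (0\<^sub>m 1 k) (0\<^sub>m k 1) (1\<^sub>m k)"
      using XY by (intro cong_four_block_mat) auto
    also have "\<dots> = 1\<^sub>m (Suc k)" by simp
    finally show "four_block_mat (1\<^sub>m 1) (0\<^sub>m 1 k) (0\<^sub>m k 1) X * four_block_mat (1\<^sub>m 1) (0\<^sub>m 1 k) (0\<^sub>m k 1) Y
     = (1\<^sub>m (Suc k) :: 'a mat)" .
  qed
  have c: "four_block_mat (1\<^sub>m 1) (0\<^sub>m 1 k) (0\<^sub>m k 1) X \<in> carrier_mat (Suc k) (Suc k)"
    if "X \<in> carrier_mat k k" for X :: "'a mat"
    using four_block_carrier_mat[OF one_carrier_mat[of 1] that, where B = "0\<^sub>m 1 k" and C = "0\<^sub>m k 1"] by simp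
  show ?thesis unfolding inv_mat_def
    using prod[OF PP(1,2,3)] prod[OF PP(2,1,4)] c[OF PP(1)] c[OF PP(2)] by blast
qed

lemma block_shape:
  fixes C :: "'a::comm_ring_1 mat"
  assumes C: "C \<in> carrier_mat (Suc m) (Suc n)"
    and z1: "\<forall>i. 0 < i \<and> i < Suc m \<longrightarrow> C$$(i,0) = 0" and z2: "\<forall>j. 0 < j \<and> j < Suc n \<longrightarrow> C$$(0,j) = 0"
  shows "C = four_block_mat (mat 1 1 (\<lambda>_. C$$(0,0))) (0\<^sub>m 1 n) (0\<^sub>m m 1) (mat m n (\<lambda>(i,j). C$$(Suc i, Suc j)))"
proof (rule eq_matI)
  fix i j assume ij: "i < dim_row (four_block_mat (mat 1 1 (\<lambda>_. C$$(0,0))) (0\<^sub>m 1 n) (0\<^sub>m m 1) (mat m n (\<lambda>(i,j). C$$(Suc i, Suc j))))"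
    "j < dim_col (four_block_mat (mat 1 1 (\<lambda>_. C$$(0,0))) (0\<^sub>m 1 n) (0\<^sub>m m 1) (mat m n (\<lambda>(i,j). C$$(Suc i, Suc j))))"
  then have ij': "i < Suc m" "j < Suc n" by auto
  show "C $$ (i, j) = four_block_mat (mat 1 1 (\<lambda>_. C$$(0,0))) (0\<^sub>m 1 n) (0\<^sub>m m 1) (mat m n (\<lambda>(i,j). C$$(Suc i, Suc j))) $$ (i, j)"
  proof (cases "i = 0")
    case True
    then show ?thesis using ij' z2 by (cases "j = 0") auto
  next
    case False
    then obtain i' where i': "i = Suc i'" by (cases i) auto
    show ?thesis
    proof (cases "j = 0")
      case True then show ?thesis using ij' z1 False by auto
    next
      case False
      then obtain j' where j': "j = Suc j'" by (cases j) auto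
      show ?thesis using ij' i' j' by auto
    qed
  qed
qed (use C in auto)

lemma diag_main:
  fixes A :: "'a::comm_ring_1 mat"
  assumes bz: "bezout_ring TYPE('a)" and ls: "locally_stable TYPE('a)"
  shows "A \<in> carrier_mat m n \<Longrightarrow> \<exists>D. eqv m n A D \<and> diagonal_divisibility D"
proof (induction m arbitrary: n A)
  case 0
  then show ?case using eqv_refl[OF 0] by (intro exI[of _ A]) (auto simp: diagonal_divisibility_def)
next
  case (Suc m)
  note A = Suc.prems
  show ?case
  proof (cases n)
    case 0
    then show ?thesis using eqv_refl[OF A] A by (intro exI[of _ A]) (auto simp: diagonal_divisibility_def)
  next
    case (Suc n')
    note n = this
    obtain B where B: "eqv (Suc m) n A B" "\<forall>i<Suc m. \<forall>j<n. B$$(0,0) dvd B$$(i,j)"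
      using pivot[OF bz ls A] n by auto
    have Bc: "B \<in> carrier_mat (Suc m) n" by (rule eqv_carrier[OF B(1)])
    obtain C where C: "eqv (Suc m) n B C" "C$$(0,0) = B$$(0,0)" "\<forall>i. 0 < i \<and> i < Suc m \<longrightarrow> C$$(i,0) = 0"
      "\<forall>j. 0 < j \<and> j < n \<longrightarrow> C$$(0,j) = 0" "\<forall>i<Suc m. \<forall>j<n. B$$(0,0) dvd C$$(i,j)"
      using clear[OF Bc _ _ B(2)] n by auto
    have Cc: "C \<in> carrier_mat (Suc m) (Suc n')" using eqv_carrier[OF C(1)] n by simp
    define g where "g = C$$(0,0)"
    define D0 where "D0 = mat m n' (\<lambda>(i,j). C$$(Suc i, Suc j))"
    have D0c: "D0 \<in> carrier_mat m n'" unfolding D0_def by simp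
    have D0dv: "\<And>i j. i < m \<Longrightarrow> j < n' \<Longrightarrow> g dvd D0$$(i,j)"
      unfolding D0_def g_def using C(2,5) n by auto
    have Cshape: "C = four_block_mat (mat 1 1 (\<lambda>_. g)) (0\<^sub>m 1 n') (0\<^sub>m m 1) D0"
      unfolding g_def D0_def by (rule block_shape[OF Cc C(3)]) (use C(4) n in auto)
    obtain D1 where D1: "eqv m n' D0 D1" "diagonal_divisibility D1"
      using Suc.IH[OF D0c] by blast
    obtain P' Q' where PQ': "inv_mat m P'" "inv_mat n' Q'" "D1 = P' * D0 * Q'"
      using D1(1) unfolding eqv_def by blast
    have P'c: "P' \<in> carrier_mat m m" and Q'c: "Q' \<in> carrier_mat n' n'"
      using PQ' unfolding inv_mat_def by auto
    define Pb where "Pb = four_block_mat (1\<^sub>m 1) (0\<^sub>m 1 m) (0\<^sub>m m 1) P'"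
    define Qb where "Qb = four_block_mat (1\<^sub>m 1) (0\<^sub>m 1 n') (0\<^sub>m n' 1) Q'"
    have Pbi: "inv_mat (Suc m) Pb" unfolding Pb_def by (rule inv_mat_block[OF PQ'(1)])
    have Qbi: "inv_mat n Qb" unfolding Qb_def n by (rule inv_mat_block[OF PQ'(2)])
    define G where "G = (mat 1 1 (\<lambda>_. g) :: 'a mat)"
    have Gc: "G \<in> carrier_mat 1 1" unfolding G_def by simp
    have PD0c: "P' * D0 \<in> carrier_mat m n'" using P'c D0c by simp
    have "Pb * C = four_block_mat (1\<^sub>m 1 * G + 0\<^sub>m 1 m * 0\<^sub>m m 1) (1\<^sub>m 1 * 0\<^sub>m 1 n' + 0\<^sub>m 1 m * D0)
          (0\<^sub>m m 1 * G + P' * 0\<^sub>m m 1) (0\<^sub>m m 1 * 0\<^sub>m 1 n' + P' * D0)"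
      unfolding Pb_def Cshape G_def[symmetric] by (rule mult_four_block_mat) (use P'c D0c Gc in auto)
    also have "\<dots> = four_block_mat G (0\<^sub>m 1 n') (0\<^sub>m m 1) (P' * D0)"
      using P'c D0c Gc by (intro cong_four_block_mat) auto
    finally have PbC: "Pb * C = four_block_mat G (0\<^sub>m 1 n') (0\<^sub>m m 1) (P' * D0)" .
    have "Pb * C * Qb = four_block_mat (G * 1\<^sub>m 1 + 0\<^sub>m 1 n' * 0\<^sub>m n' 1) (G * 0\<^sub>m 1 n' + 0\<^sub>m 1 n' * Q')
          (0\<^sub>m m 1 * 1\<^sub>m 1 + (P' * D0) * 0\<^sub>m n' 1) (0\<^sub>m m 1 * 0\<^sub>m 1 n' + (P' * D0) * Q')"
      unfolding PbC Qb_def by (rule mult_four_block_mat) (use PD0c Q'c Gc in auto)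
    also have "\<dots> = four_block_mat G (0\<^sub>m 1 n') (0\<^sub>m m 1) D1"
      unfolding PQ'(3) using PD0c Q'c Gc by (intro cong_four_block_mat) (auto simp: right_mult_zero_mat[OF PD0c])
    finally have F: "Pb * C * Qb = four_block_mat G (0\<^sub>m 1 n') (0\<^sub>m m 1) D1" .
    have D1c: "D1 \<in> carrier_mat m n'" by (rule eqv_carrier[OF D1(1)])
    have D1dv: "\<And>i j. i < m \<Longrightarrow> j < n' \<Longrightarrow> g dvd D1$$(i,j)"
      unfolding PQ'(3) by (rule dvd_mult_mat_both[OF P'c D0c Q'c D0dv])
    have D1d: "\<And>i j. i < m \<Longrightarrow> j < n' \<Longrightarrow> i \<noteq> j \<Longrightarrow> D1$$(i,j) = 0"
      "\<And>i. Suc i < m \<Longrightarrow> Suc i < n' \<Longrightarrow> D1$$(i,i) dvd D1$$(Suc i, Suc i)"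
      using D1(2) D1c unfolding diagonal_divisibility_def by auto
    have diagF: "diagonal_divisibility (four_block_mat G (0\<^sub>m 1 n') (0\<^sub>m m 1) D1)"
      unfolding diagonal_divisibility_def
    proof (intro conjI allI impI)
      fix i j assume ij: "i < dim_row (four_block_mat G (0\<^sub>m 1 n') (0\<^sub>m m 1) D1)"
        "j < dim_col (four_block_mat G (0\<^sub>m 1 n') (0\<^sub>m m 1) D1)" "i \<noteq> j"
      then have ij': "i < Suc m" "j < Suc n'" using Gc D1c by auto
      show "four_block_mat G (0\<^sub>m 1 n') (0\<^sub>m m 1) D1 $$ (i, j) = 0"
        using ij ij' Gc D1c D1d(1)[of "i - 1" "j - 1"] by (auto simp: G_def)
    next
      fix i assume i: "Suc i < dim_row (four_block_mat G (0\<^sub>m 1 n') (0\<^sub>m m 1) D1)"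
        "Suc i < dim_col (four_block_mat G (0\<^sub>m 1 n') (0\<^sub>m m 1) D1)"
      then have i': "i < m" "i < n'" using Gc D1c by auto
      show "four_block_mat G (0\<^sub>m 1 n') (0\<^sub>m m 1) D1 $$ (i, i) dvd
            four_block_mat G (0\<^sub>m 1 n') (0\<^sub>m m 1) D1 $$ (Suc i, Suc i)"
      proof (cases i)
        case 0
        then show ?thesis using i' Gc D1c D1dv[of 0 0] by (auto simp: G_def)
      next
        case (Suc i0)
        then show ?thesis using i i' Gc D1c D1d(2)[of i0] by auto
      qed
    qed
    have "eqv (Suc m) n A (Pb * C * Qb)"
    proof -
      have "eqv (Suc m) n C (Pb * C)" using eqv_left[OF _ Pbi] Cc n by simp
      moreover have "eqv (Suc m) n (Pb * C) (Pb * C * Qb)"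
        by (rule eqv_right[OF _ Qbi]) (use Pbi Cc n in \<open>auto simp: inv_mat_def\<close>)
      ultimately show ?thesis using B(1) C(1) eqv_trans by blast
    qed
    then show ?thesis using diagF F by auto
  qed
qed



lemma gen_ideal_zero: "0 \<in> gen_ideal S"
  unfolding gen_ideal_def by (rule CollectI, rule exI[of _ "{}"], auto)

lemma gen_ideal_add:
  assumes "x \<in> gen_ideal S" "y \<in> gen_ideal S" shows "x + y \<in> gen_ideal S"
proof -
  obtain T1 f1 where T1: "finite T1" "T1 \<subseteq> S" "x = (\<Sum>s\<in>T1. f1 s * s)"
    using assms(1) unfolding gen_ideal_def by auto
  obtain T2 f2 where T2: "finite T2" "T2 \<subseteq> S" "y = (\<Sum>s\<in>T2. f2 s * s)"
    using assms(2) unfolding gen_ideal_def by auto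
  define f where "f = (\<lambda>s. (if s \<in> T1 then f1 s else 0) + (if s \<in> T2 then f2 s else 0))"
  have "(\<Sum>s\<in>T1 \<union> T2. f s * s) = (\<Sum>s\<in>T1 \<union> T2. (if s \<in> T1 then f1 s * s else 0)) + (\<Sum>s\<in>T1 \<union> T2. (if s \<in> T2 then f2 s * s else 0))"
  proof -
    have "\<And>s. f s * s = (if s \<in> T1 then f1 s * s else 0) + (if s \<in> T2 then f2 s * s else 0)"
      unfolding f_def by (auto simp: distrib_right)
    then show ?thesis by (simp add: sum.distrib)
  qed
  also have "(\<Sum>s\<in>T1 \<union> T2. (if s \<in> T1 then f1 s * s else 0)) = (\<Sum>s\<in>T1. (if s \<in> T1 then f1 s * s else 0))"
    by (rule sum.mono_neutral_right) (use T1 T2 in auto)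
  also have "(\<Sum>s\<in>T1 \<union> T2. (if s \<in> T2 then f2 s * s else 0)) = (\<Sum>s\<in>T2. (if s \<in> T2 then f2 s * s else 0))"
    by (rule sum.mono_neutral_right) (use T1 T2 in auto)
  finally have "x + y = (\<Sum>s\<in>T1 \<union> T2. f s * s)" using T1 T2 by simp
  then show ?thesis unfolding gen_ideal_def
    by (intro CollectI exI[of _ "T1 \<union> T2"] exI[of _ f] conjI) (use T1 T2 in auto)
qed

lemma gen_ideal_mult:
  assumes "x \<in> gen_ideal S" shows "c * x \<in> gen_ideal S"
proof -
  obtain T f where T: "finite T" "T \<subseteq> S" "x = (\<Sum>s\<in>T. f s * s)"
    using assms unfolding gen_ideal_def by auto
  have "c * x = (\<Sum>s\<in>T. (c * f s) * s)" unfolding T(3) by (simp add: sum_distrib_left mult.assoc)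
  then show ?thesis unfolding gen_ideal_def
    by (intro CollectI exI[of _ T] exI[of _ "\<lambda>s. c * f s"] conjI) (use T in auto)
qed

lemma gen_ideal_sum:
  assumes "finite I" "\<And>i. i \<in> I \<Longrightarrow> g i \<in> gen_ideal S" shows "sum g I \<in> gen_ideal S"
  using assms by (induction I rule: finite_induct) (auto intro: gen_ideal_add gen_ideal_zero)

lemma gen_ideal_mat_left:
  fixes A :: "'a::comm_ring_1 mat"
  assumes P: "P \<in> carrier_mat k m" and A: "A \<in> carrier_mat m n" and j: "j < n" and i: "i < k"
    and dv: "\<And>i' j'. i' < m \<Longrightarrow> j' < n \<Longrightarrow> A $$ (i', j') \<in> gen_ideal S"
  shows "(P * A) $$ (i, j) \<in> gen_ideal S"
proof -
  have "(P * A) $$ (i, j) = (\<Sum>l\<in>{0..<m}. P $$ (i,l) * A $$ (l,j))"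
    using P A i j by (simp add: scalar_prod_def)
  also have "\<dots> \<in> gen_ideal S" by (rule gen_ideal_sum) (use dv j in \<open>auto intro: gen_ideal_mult\<close>)
  finally show ?thesis .
qed

lemma gen_ideal_mat_right:
  fixes A :: "'a::comm_ring_1 mat"
  assumes Q: "Q \<in> carrier_mat n l" and A: "A \<in> carrier_mat m n" and j: "j < l" and i: "i < m"
    and dv: "\<And>i' j'. i' < m \<Longrightarrow> j' < n \<Longrightarrow> A $$ (i', j') \<in> gen_ideal S"
  shows "(A * Q) $$ (i, j) \<in> gen_ideal S"
proof -
  have "(A * Q) $$ (i, j) = (\<Sum>l\<in>{0..<n}. Q $$ (l,j) * A $$ (i,l))"
    using Q A i j by (simp add: scalar_prod_def mult.commute)
  also have "\<dots> \<in> gen_ideal S" by (rule gen_ideal_sum) (use dv i in \<open>auto intro: gen_ideal_mult\<close>)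
  finally show ?thesis .
qed

lemma edr_bezout:
  assumes edr: "elementary_divisor_ring TYPE('a::comm_ring_1)"
  shows "bezout_ring TYPE('a)"
  unfolding bezout_ring_def
proof (intro allI impI)
  fix S :: "'a set" assume "finite S"
  then obtain xs where xs: "S = set xs" using finite_list by blast
  define n where "n = length xs"
  show "\<exists>d. gen_ideal S = range (\<lambda>r. d * r)"
  proof (cases "n = 0")
    case True
    then have S: "S = {}" using xs n_def by simp
    have "gen_ideal S = {0}" unfolding S gen_ideal_def by auto
    then show ?thesis by (intro exI[of _ 0]) auto
  next
    case False
    define A where "A = (mat 1 n (\<lambda>(i,j). xs ! j) :: 'a mat)"
    have Ac: "A \<in> carrier_mat 1 n" unfolding A_def by simp
    have Aent: "\<And>j. j < n \<Longrightarrow> A $$ (0, j) = xs ! j" unfolding A_def by simp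
    have adm: "admits_diagonal_reduction A" using edr unfolding elementary_divisor_ring_def by blast
    have dims: "dim_row A = 1" "dim_col A = n" unfolding A_def by simp_all
    obtain P Q where PQ: "P \<in> carrier_mat 1 1" "invertible_mat P" "Q \<in> carrier_mat n n" "invertible_mat Q"
      "diagonal_divisibility (P * A * Q)"
      using adm unfolding admits_diagonal_reduction_def dims by blast
    define B where "B = P * A * Q"
    have Bc: "B \<in> carrier_mat 1 n" unfolding B_def using PQ Ac by simp
    define d where "d = B $$ (0,0)"
    have Bz: "\<And>j. 0 < j \<Longrightarrow> j < n \<Longrightarrow> B $$ (0,j) = 0"
      using PQ(5) Bc unfolding B_def[symmetric] diagonal_divisibility_def by auto
    have Ain: "\<And>i j. i < 1 \<Longrightarrow> j < n \<Longrightarrow> A $$ (i, j) \<in> gen_ideal S"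
      using Aent xs n_def by (auto intro!: gen_ideal_mem)
    have PAc: "P * A \<in> carrier_mat 1 n" using PQ(1) Ac by simp
    have PAin: "\<And>i j. i < 1 \<Longrightarrow> j < n \<Longrightarrow> (P*A)$$(i,j) \<in> gen_ideal S"
      using gen_ideal_mat_left[OF PQ(1) Ac _ _ Ain] by blast
    have dS: "d \<in> gen_ideal S" unfolding d_def B_def
      by (rule gen_ideal_mat_right[OF PQ(3) PAc _ _ PAin]) (use False in auto)
    have "inv_mat 1 P" using PQ(1,2) inv_mat_iff[of 1 P] by simp
    then obtain P' where P': "P' \<in> carrier_mat 1 1" "P' * P = 1\<^sub>m 1"
      unfolding inv_mat_def by blast
    have "inv_mat n Q" using PQ(3,4) inv_mat_iff[of n Q] by simp
    then obtain Q' where Q': "Q' \<in> carrier_mat n n" "Q * Q' = 1\<^sub>m n"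
      unfolding inv_mat_def by blast
    have "P' * B * Q' = A"
    proof -
      have "P * A * Q = P * (A * Q)" using PQ Ac by (intro assoc_mult_mat) auto
      then have "P' * B = P' * (P * (A * Q))" unfolding B_def by simp
      also have "\<dots> = (P' * P) * (A * Q)" using PQ Ac P' by (intro assoc_mult_mat[symmetric]) auto
      also have "\<dots> = A * Q" using P' Ac PQ by simp
      finally have "P' * B * Q' = A * Q * Q'" by simp
      also have "\<dots> = A * (Q * Q')" using PQ Ac Q' by (intro assoc_mult_mat) auto
      also have "\<dots> = A" using Q' Ac by simp
      finally show ?thesis .
    qed
    note PBQ = this
    have Bdv: "\<And>i j. i < 1 \<Longrightarrow> j < n \<Longrightarrow> d dvd B$$(i,j)"
    proof -
      fix i j assume ij: "i < (1::nat)" "j < n"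
      then have i0: "i = 0" by simp
      show "d dvd B$$(i,j)"
      proof (cases "j = 0")
        case True then show ?thesis unfolding d_def i0 by simp
      next
        case False then show ?thesis using Bz[of j] ij i0 by simp
      qed
    qed
    have dA: "\<And>j. j < n \<Longrightarrow> d dvd A $$ (0,j)"
    proof -
      fix j assume j: "j < n"
      have "d dvd (P' * B * Q')$$(0,j)"
        by (rule dvd_mult_mat_both[OF P'(1) Bc Q'(1) Bdv]) (use j in auto)
      then show "d dvd A $$ (0,j)" unfolding PBQ .
    qed
    have "gen_ideal S = range (\<lambda>r. d * r)"
    proof
      show "gen_ideal S \<subseteq> range (\<lambda>r. d * r)"
      proof
        fix x assume "x \<in> gen_ideal S"
        then obtain T f where T: "T \<subseteq> S" "x = (\<Sum>s\<in>T. f s * s)" unfolding gen_ideal_def by auto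
        have "d dvd x" unfolding T(2)
        proof (rule dvd_sum)
          fix s assume "s \<in> T"
          then have "s \<in> set xs" using T(1) xs by auto
          then obtain j where j: "j < n" "s = xs ! j" unfolding in_set_conv_nth n_def by blast
          have "d dvd s" using dA[OF j(1)] Aent[OF j(1)] j(2) by simp
          then show "d dvd f s * s" by (rule dvd_mult)
        qed
        then obtain r where "x = d * r" by (rule dvdE)
        then show "x \<in> range (\<lambda>r. d * r)" by (intro range_eqI[of _ _ r])
      qed
    next
      show "range (\<lambda>r. d * r) \<subseteq> gen_ideal S"
      proof
        fix y assume "y \<in> range (\<lambda>r. d * r)"
        then obtain r where r: "y = d * r" by blast
        have "r * d \<in> gen_ideal S" by (rule gen_ideal_mult[OF dS])
        then show "y \<in> gen_ideal S" unfolding r by (simp only: mult.commute)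
      qed
    qed
    then show ?thesis by blast
  qed
qed

theorem theorem3p3:
  assumes "locally_stable TYPE('a::comm_ring_1)"
  shows "elementary_divisor_ring TYPE('a) \<longleftrightarrow> bezout_ring TYPE('a)"
proof
  assume "elementary_divisor_ring TYPE('a)"
  then show "bezout_ring TYPE('a)" by (rule edr_bezout)
next
  assume bz: "bezout_ring TYPE('a)"
  show "elementary_divisor_ring TYPE('a)"
    unfolding elementary_divisor_ring_def admits_diagonal_reduction_def
  proof
    fix A :: "'a mat"
    have Ac: "A \<in> carrier_mat (dim_row A) (dim_col A)" by (rule carrier_matI) auto
    obtain D where D: "eqv (dim_row A) (dim_col A) A D" "diagonal_divisibility D"
      using diag_main[OF bz assms Ac] by blast
    obtain P Q where PQ: "inv_mat (dim_row A) P" "inv_mat (dim_col A) Q" "D = P * A * Q"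
      using D(1) unfolding eqv_def by blast
    show "\<exists>P Q. P \<in> carrier_mat (dim_row A) (dim_row A) \<and> invertible_mat P \<and>
              Q \<in> carrier_mat (dim_col A) (dim_col A) \<and> invertible_mat Q \<and>
              diagonal_divisibility (P * A * Q)"
    proof -
      have P: "P \<in> carrier_mat (dim_row A) (dim_row A)" "invertible_mat P" using PQ(1)[unfolded inv_mat_iff] by simp_all
      have Q: "Q \<in> carrier_mat (dim_col A) (dim_col A)" "invertible_mat Q" using PQ(2)[unfolded inv_mat_iff] by simp_all
      show ?thesis using P Q D(2) PQ(3) by (intro exI[of _ P] exI[of _ Q]) simp
    qed
  qed
qed

end
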